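(* Let $(N,\{S_i\}_{i\in N},S,\{f_i\}_{i\in N})$ be a supermodular game such that $S$ is a subcomplete sublattice of $\prod_{i\in N}S_i$. Suppose that for every $i\in N$ and every $x\in S$, the function $f_i(\cdot,x_{-i}):S_i(x_{-i})\to\mathbb{R}$ is downward upper semicontinuous. Then for every $i\in N$, every $x\in S$ and every nonempty chain $C\subset S(x)$, there is $b\in S(x)$ such that $b\le c$ for every $c\in C$ and $f_i(b_i,x_{-i})\ge\limsup_{c\in C,c\to\inf_S C}f_i(c_i,x_{-i})$.
   Context: A subset $T$ of a poset $P$ is a subcomplete sublattice of $P$ if for every nonempty $A\subset T$, $\sup_P A$ and $\inf_P A$ exist and belong to $T$; $P$ is a complete lattice if it is a subcomplete sublattice of itself. A supermodular game $(N,\{S_i\},S,\{f_i\})$ consists of: a nonempty finite set $N$ of players; for each $i\in N$ a nonempty lattice $S_i$; a nonempty sublattice $S\subset\prod_{i\in N}S_i$ (product order) such that every projection $S\to S_i$ is surjective; and for each $i\in N$ a function $f_i:S\to\mathbb{R}$; such that for every $i\in N$: (1) for every $x_{-i}\in S_{-i}:=\prod_{j\ne i}S_j$, the function $f_i(\cdot,x_{-i})$ is supermodular on the sublattice $S_i(x_{-i}):=\{x_i\in S_i:(x_i,x_{-i})\in S\}$ of $S_i$; (2) $f_i$ has increasing differences on $S$ viewed as a subset of $S_i\times S_{-i}$: whenever $x_i\le x_i'$, $x_{-i}\le x_{-i}'$ and the four points $(x_i,x_{-i}),(x_i',x_{-i}),(x_i,x_{-i}'),(x_i',x_{-i}')$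 lie in $S$, one has $f_i(x_i',x_{-i})-f_i(x_i,x_{-i})\le f_i(x_i',x_{-i}')-f_i(x_i,x_{-i}')$. For $x\in S$, $S(x):=\left(\prod_{i\in N}S_i(x_{-i})\right)\cap S$. For a chain $C$ in a poset and a real function $g$ on $C$, $\limsup_{c\in C,c\to\inf C}g(c):=\inf_{c'\in C}\sup\{g(c):c\in C,c\le c'\}$. For a complete lattice $X$, a function $f:X\to\mathbb{R}$ is downward upper semicontinuous if for every nonempty chain $C\subset X$, $\limsup_{x\in C,x\to\inf_X C}f(x)\le f(\inf_X C)$. (Under the hypotheses, each $S_i(x_{-i})$ is a complete lattice.) *)

theory Defs
  imports Complex_Main "HOL-Library.FuncSet" "HOL-Library.Extended_Real"
begin

text \<open>Strategy profiles are functions 'n => 'a in the extensional product PiE N Si,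
  ordered pointwise (the library order on functions), which is the product order.\<close>

definition is_sup_in :: "'b::order set \<Rightarrow> 'b set \<Rightarrow> 'b \<Rightarrow> bool" where
  "is_sup_in P A s \<longleftrightarrow> s \<in> P \<and> (\<forall>a\<in>A. a \<le> s) \<and> (\<forall>u\<in>P. (\<forall>a\<in>A. a \<le> u) \<longrightarrow> s \<le> u)"

definition is_inf_in :: "'b::order set \<Rightarrow> 'b set \<Rightarrow> 'b \<Rightarrow> bool" where
  "is_inf_in P A s \<longleftrightarrow> s \<in> P \<and> (\<forall>a\<in>A. s \<le> a) \<and> (\<forall>u\<in>P. (\<forall>a\<in>A. u \<le> a) \<longrightarrow> u \<le> s)"

definition lattice_on :: "'b::order set \<Rightarrow> bool" where
  "lattice_on P \<longleftrightarrow> (\<forall>x\<in>P. \<forall>y\<in>P. (\<exists>s. is_sup_in P {x, y} s) \<and> (\<exists>t. is_inf_in P {x, y} t))"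

definition sublattice_of :: "'b::order set \<Rightarrow> 'b set \<Rightarrow> bool" where
  "sublattice_of T P \<longleftrightarrow> T \<subseteq> P \<and>
     (\<forall>x\<in>T. \<forall>y\<in>T. (\<exists>s. is_sup_in P {x, y} s \<and> s \<in> T) \<and> (\<exists>t. is_inf_in P {x, y} t \<and> t \<in> T))"

definition subcomplete_sublattice_of :: "'b::order set \<Rightarrow> 'b set \<Rightarrow> bool" where
  "subcomplete_sublattice_of T P \<longleftrightarrow> T \<subseteq> P \<and>
     (\<forall>A. A \<subseteq> T \<longrightarrow> A \<noteq> {} \<longrightarrow>
        (\<exists>s. is_sup_in P A s \<and> s \<in> T) \<and> (\<exists>t. is_inf_in P A t \<and> t \<in> T))"

definition chain_in :: "'b::order set \<Rightarrow> bool" where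
  "chain_in C \<longleftrightarrow> (\<forall>x\<in>C. \<forall>y\<in>C. x \<le> y \<or> y \<le> x)"

definition supermodular_on :: "'b::order set \<Rightarrow> 'b set \<Rightarrow> ('b \<Rightarrow> real) \<Rightarrow> bool" where
  "supermodular_on X L g \<longleftrightarrow>
     (\<forall>a\<in>L. \<forall>b\<in>L. \<forall>s t. is_sup_in X {a, b} s \<longrightarrow> is_inf_in X {a, b} t \<longrightarrow>
        g a + g b \<le> g s + g t)"

text \<open>S_i(x_{-i}) = {a in S_i. (a, x_{-i}) in S}; the profile (a, x_{-i}) is x(i := a).\<close>
definition sect :: "('n \<Rightarrow> 'a set) \<Rightarrow> ('n \<Rightarrow> 'a) set \<Rightarrow> 'n \<Rightarrow> ('n \<Rightarrow> 'a) \<Rightarrow> 'a set" where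
  "sect Si S i x = {a \<in> Si i. x(i := a) \<in> S}"

definition Sx :: "'n set \<Rightarrow> ('n \<Rightarrow> 'a set) \<Rightarrow> ('n \<Rightarrow> 'a) set \<Rightarrow> ('n \<Rightarrow> 'a) \<Rightarrow> ('n \<Rightarrow> 'a) set" where
  "Sx N Si S x = {y \<in> S. \<forall>i\<in>N. y i \<in> sect Si S i x}"

definition supermodular_game ::
  "'n set \<Rightarrow> ('n \<Rightarrow> 'a::order set) \<Rightarrow> ('n \<Rightarrow> 'a) set \<Rightarrow> ('n \<Rightarrow> ('n \<Rightarrow> 'a) \<Rightarrow> real) \<Rightarrow> bool" where
  "supermodular_game N Si S f \<longleftrightarrow>
     finite N \<and> N \<noteq> {} \<and>
     (\<forall>i\<in>N. Si i \<noteq> {} \<and> lattice_on (Si i)) \<and>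
     S \<noteq> {} \<and> sublattice_of S (Pi\<^sub>E N Si) \<and>
     (\<forall>i\<in>N. \<forall>a\<in>Si i. \<exists>x\<in>S. x i = a) \<and>
     (\<forall>i\<in>N.
        (\<forall>y\<in>Pi\<^sub>E N Si. supermodular_on (Si i) (sect Si S i y) (\<lambda>a. f i (y(i := a)))) \<and>
        (\<forall>a\<in>Si i. \<forall>a2\<in>Si i. \<forall>y\<in>Pi\<^sub>E N Si. \<forall>y2\<in>Pi\<^sub>E N Si.
            a \<le> a2 \<longrightarrow> (\<forall>j\<in>N - {i}. y j \<le> y2 j) \<longrightarrow>
            y(i := a) \<in> S \<longrightarrow> y(i := a2) \<in> S \<longrightarrow> y2(i := a) \<in> S \<longrightarrow> y2(i := a2) \<in> S \<longrightarrow>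
            f i (y(i := a2)) - f i (y(i := a)) \<le> f i (y2(i := a2)) - f i (y2(i := a))))"

text \<open>limsup_{c in C, c -> inf C} g(c) := inf_{c' in C} sup {g c. c in C, c <= c'},
  taken in the extended reals (so it is always defined).\<close>
definition chain_limsup :: "'b::order set \<Rightarrow> ('b \<Rightarrow> real) \<Rightarrow> ereal" where
  "chain_limsup C g = (INF c'\<in>C. SUP c\<in>{c \<in> C. c \<le> c'}. ereal (g c))"

definition downward_usc_on :: "'b::order set \<Rightarrow> ('b \<Rightarrow> real) \<Rightarrow> bool" where
  "downward_usc_on X g \<longleftrightarrow>
     (\<forall>C m. C \<subseteq> X \<longrightarrow> C \<noteq> {} \<longrightarrow> chain_in C \<longrightarrow> is_inf_in X C m \<longrightarrow>
        chain_limsup C g \<le> ereal (g m))"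

end

theory Submission
  imports Defs
begin

lemma inf_comp:
  assumes "is_inf_in (Pi\<^sub>E N Si) A s" "j \<in> N" "u \<in> Si j" "\<forall>a\<in>A. u \<le> a j"
  shows "u \<le> s j"
proof -
  have sP: "s \<in> Pi\<^sub>E N Si" using assms(1) unfolding is_inf_in_def by blast
  have sl: "\<forall>a\<in>A. s \<le> a" using assms(1) unfolding is_inf_in_def by blast
  have "s(j := u) \<in> Pi\<^sub>E N Si" using sP assms(2,3) by (auto simp: PiE_def Pi_def extensional_def)
  moreover have "\<forall>a\<in>A. s(j := u) \<le> a"
    using sl assms(4) by (auto simp: le_fun_def)
  ultimately have "s(j := u) \<le> s" using assms(1) unfolding is_inf_in_def by blast
  then show ?thesis by (auto simp: le_fun_def dest: spec[of _ j])
qed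

lemma limsup_proj:
  "chain_limsup C (\<lambda>c. g (c i)) \<le> chain_limsup ((\<lambda>c. c i) ` C) g"
  unfolding chain_limsup_def
proof (rule INF_mono)
  fix a' assume "a' \<in> (\<lambda>c. c i) ` C"
  then obtain c' where c': "c' \<in> C" "a' = c' i" by blast
  have "(SUP c\<in>{c \<in> C. c \<le> c'}. ereal (g (c i))) \<le> (SUP a\<in>{a \<in> (\<lambda>c. c i) ` C. a \<le> a'}. ereal (g a))"
  proof (rule SUP_mono)
    fix c assume "c \<in> {c \<in> C. c \<le> c'}"
    then have "c i \<in> {a \<in> (\<lambda>c. c i) ` C. a \<le> a'}" using c' by (auto simp: le_fun_def)
    then show "\<exists>a\<in>{a \<in> (\<lambda>c. c i) ` C. a \<le> a'}. ereal (g (c i)) \<le> ereal (g a)" by blast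
  qed
  then show "\<exists>c'\<in>C. (SUP c\<in>{c \<in> C. c \<le> c'}. ereal (g (c i))) \<le> (SUP a\<in>{a \<in> (\<lambda>c. c i) ` C. a \<le> a'}. ereal (g a))"
    using c' by blast
qed

theorem lemma5p7:
  fixes N :: "'n set" and Si :: "'n \<Rightarrow> 'a::order set" and S :: "('n \<Rightarrow> 'a) set"
    and f :: "'n \<Rightarrow> ('n \<Rightarrow> 'a) \<Rightarrow> real"
  assumes game: "supermodular_game N Si S f"
    and subcomplete: "subcomplete_sublattice_of S (Pi\<^sub>E N Si)"
    and usc: "\<And>i x. i \<in> N \<Longrightarrow> x \<in> S \<Longrightarrow> downward_usc_on (sect Si S i x) (\<lambda>a. f i (x(i := a)))"
  shows "\<forall>i\<in>N. \<forall>x\<in>S. \<forall>C. C \<subseteq> Sx N Si S x \<longrightarrow> C \<noteq> {} \<longrightarrow> chain_in C \<longrightarrow>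
           (\<exists>b\<in>Sx N Si S x. (\<forall>c\<in>C. b \<le> c) \<and>
              chain_limsup C (\<lambda>c. f i (x(i := c i))) \<le> ereal (f i (x(i := b i))))"
proof (intro ballI allI impI)
  fix i x C
  assume i: "i \<in> N" and x: "x \<in> S" and CS: "C \<subseteq> Sx N Si S x" and Cne: "C \<noteq> {}"
    and ch: "chain_in C"
  have SP: "S \<subseteq> Pi\<^sub>E N Si" using subcomplete unfolding subcomplete_sublattice_of_def by blast
  have sc: "\<And>A. A \<subseteq> S \<Longrightarrow> A \<noteq> {} \<Longrightarrow> \<exists>t. is_inf_in (Pi\<^sub>E N Si) A t \<and> t \<in> S"
    using subcomplete unfolding subcomplete_sublattice_of_def by blast
  have CinS: "C \<subseteq> S" using CS unfolding Sx_def by blast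
  have Csect: "\<And>c j. c \<in> C \<Longrightarrow> j \<in> N \<Longrightarrow> x(j := c j) \<in> S"
    using CS unfolding Sx_def sect_def by blast
  obtain m where m: "is_inf_in (Pi\<^sub>E N Si) C m" "m \<in> S" using sc[OF CinS Cne] by blast
  have mP: "m \<in> Pi\<^sub>E N Si" using m(2) SP by blast
  have mle: "\<forall>c\<in>C. m \<le> c" using m(1) unfolding is_inf_in_def by blast
  have xP: "x \<in> Pi\<^sub>E N Si" using x SP by blast
  obtain c0 where c0: "c0 \<in> C" using Cne by blast
  have mj: "x(j := m j) \<in> S" if j: "j \<in> N" for j
  proof -
    let ?A = "(\<lambda>c. x(j := c j)) ` C"
    have "?A \<subseteq> S" using Csect j by blast
    moreover have "?A \<noteq> {}" using Cne by blast
    ultimately obtain t where t: "is_inf_in (Pi\<^sub>E N Si) ?A t" "t \<in> S" using sc by blast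
    have tP: "t \<in> Pi\<^sub>E N Si" using t(2) SP by blast
    have tle: "\<forall>c\<in>C. t \<le> x(j := c j)" using t(1) unfolding is_inf_in_def by blast
    have "t = x(j := m j)"
    proof (rule ext)
      fix k
      show "t k = (x(j := m j)) k"
      proof (cases "k = j")
        case True
        have tjS: "t j \<in> Si j" using tP j by blast
        have "\<forall>c\<in>C. t j \<le> c j" using tle by (metis fun_upd_same le_funD)
        then have 1: "t j \<le> m j" using inf_comp[OF m(1) j tjS] by blast
        have mjS: "m j \<in> Si j" using mP j by blast
        have "\<forall>a\<in>?A. m j \<le> a j" using mle by (auto simp: le_fun_def)
        then have 2: "m j \<le> t j" using inf_comp[OF t(1) j mjS] by blast
        show ?thesis using 1 2 True by simp
      next
        case False
        show ?thesis
        proof (cases "k \<in> N")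
          case True
          have "t \<le> x(j := c0 j)" using tle c0 by blast
          then have 1: "t k \<le> x k" using False by (auto simp: le_fun_def dest: spec[of _ k])
          have xkS: "x k \<in> Si k" using xP True by blast
          have "\<forall>a\<in>?A. x k \<le> a k" using False by auto
          then have 2: "x k \<le> t k" using inf_comp[OF t(1) True xkS] by blast
          show ?thesis using 1 2 False by simp
        next
          case kN: False
          then show ?thesis using tP xP False by (auto simp: PiE_def extensional_def)
        qed
      qed
    qed
    then show ?thesis using t(2) by simp
  qed
  have mSx: "m \<in> Sx N Si S x"
    unfolding Sx_def sect_def using m(2) mP mj by blast
  let ?D = "(\<lambda>c. c i) ` C"
  let ?g = "\<lambda>a. f i (x(i := a))"
  have Dsub: "?D \<subseteq> sect Si S i x" using CS i unfolding Sx_def by blast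
  have Dne: "?D \<noteq> {}" using Cne by blast
  have Dch: "chain_in ?D" using ch unfolding chain_in_def by (auto simp: le_fun_def)
  have miS: "m i \<in> sect Si S i x" using mSx i unfolding Sx_def by blast
  have Dinf: "is_inf_in (sect Si S i x) ?D (m i)"
    unfolding is_inf_in_def
  proof (intro conjI ballI impI)
    show "m i \<in> sect Si S i x" by (rule miS)
  next
    fix a assume "a \<in> ?D"
    then show "m i \<le> a" using mle by (auto simp: le_fun_def)
  next
    fix u assume u: "u \<in> sect Si S i x" "\<forall>a\<in>?D. u \<le> a"
    have "u \<in> Si i" using u(1) unfolding sect_def by blast
    moreover have "\<forall>c\<in>C. u \<le> c i" using u(2) by blast
    ultimately show "u \<le> m i" using inf_comp[OF m(1) i] by blast
  qed
  have "chain_limsup ?D ?g \<le> ereal (?g (m i))"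
    using usc[OF i x] Dsub Dne Dch Dinf unfolding downward_usc_on_def by blast
  then have "chain_limsup C (\<lambda>c. f i (x(i := c i))) \<le> ereal (f i (x(i := m i)))"
    using limsup_proj[where g="?g" and i=i and C=C] by (meson order_trans)
  then show "\<exists>b\<in>Sx N Si S x. (\<forall>c\<in>C. b \<le> c) \<and>
              chain_limsup C (\<lambda>c. f i (x(i := c i))) \<le> ereal (f i (x(i := b i)))"
    using mSx mle by blast
qed

end
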